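(* For every $a \in \mathbb{N}$ and every integer $b \ge 2$, $R_\mathrm{cyc}(S_a, C_b^\mathrm{mon}) = 1 + (a-1)(b-1)$, where $S_a$ is any star graph of order $a$.
   Context: All graphs are finite, simple and undirected, and a graph of order $n$ has vertex set $\{0,1,\ldots,n-1\}$; $K_n$ is the complete graph on $\{0,\ldots,n-1\}$. A $2$-edge-coloring of $K_n$ assigns each edge a color in $\{1,2\}$. An embedding of $H$ in color $j$ is an injective map $\varphi\colon V(H)\to V(K_n)$ such that every edge $uv$ of $H$ goes to an edge $\{\varphi(u),\varphi(v)\}$ of color $j$; it is increasing up to a cyclic permutation if there exists $t\in V(H)$ such that $(\varphi(t),\ldots,\varphi(|H|-1),\varphi(0),\ldots,\varphi(t-1))$ is increasing. $R_\mathrm{cyc}(H_1,H_2)$ is the smallest $n$ such that every $2$-edge-coloring of $K_n$ admits an embedding of $H_1$ in color $1$ or of $H_2$ in color $2$ that is increasing up to a cyclic permutation. A star graph of order $n$ is a graph on $\{0,\ldots,n-1\}$ in which one vertex (the center, arbitrary) is adjacent to all others and there are no other edges. For $n\ge3$ the monotone cycle $C_n^\mathrm{mon}$ has edges $\{i,i+1\}$ ($0\le i\le n-2$) and $\{0,n-1\}$; by convention $C_2^\mathrm{mon}=K_2$. *)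

theory Defs
  imports Main
begin

(* A graph of order h has vertex set {0..<h}; it is given by its order h and
   its edge set E, a set of 2-element subsets of {0..<h}. *)

definition two_colouring :: "nat \<Rightarrow> (nat set \<Rightarrow> nat) \<Rightarrow> bool" where
  "two_colouring n col \<longleftrightarrow>
     (\<forall>e. e \<subseteq> {0..<n} \<and> card e = 2 \<longrightarrow> col e \<in> {1, 2})"

definition embedding_in_colour ::
  "nat \<Rightarrow> (nat set \<Rightarrow> nat) \<Rightarrow> nat \<Rightarrow> nat \<Rightarrow> nat set set \<Rightarrow> (nat \<Rightarrow> nat) \<Rightarrow> bool" where
  "embedding_in_colour n col j h E phi \<longleftrightarrow>
     inj_on phi {0..<h} \<and> phi ` {0..<h} \<subseteq> {0..<n} \<and>
     (\<forall>e\<in>E. col (phi ` e) = j)"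

definition cyc_increasing :: "nat \<Rightarrow> (nat \<Rightarrow> nat) \<Rightarrow> bool" where
  "cyc_increasing h phi \<longleftrightarrow>
     (\<exists>t<h. sorted_wrt (<) (map phi ([t..<h] @ [0..<t])))"

definition cyc_arrows :: "nat \<Rightarrow> nat \<Rightarrow> nat set set \<Rightarrow> nat \<Rightarrow> nat set set \<Rightarrow> bool" where
  "cyc_arrows n h1 E1 h2 E2 \<longleftrightarrow>
     (\<forall>col. two_colouring n col \<longrightarrow>
        (\<exists>phi. embedding_in_colour n col 1 h1 E1 phi \<and> cyc_increasing h1 phi) \<or>
        (\<exists>phi. embedding_in_colour n col 2 h2 E2 phi \<and> cyc_increasing h2 phi))"

definition R_cyc :: "nat \<Rightarrow> nat set set \<Rightarrow> nat \<Rightarrow> nat set set \<Rightarrow> nat" where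
  "R_cyc h1 E1 h2 E2 = (LEAST n. cyc_arrows n h1 E1 h2 E2)"

definition star_edges :: "nat \<Rightarrow> nat \<Rightarrow> nat set set" where
  "star_edges a c = {{c, v} | v. v < a \<and> v \<noteq> c}"

(* edge set of the monotone cycle C_b^mon: {i,i+1} for i <= b-2, and {0,b-1};
   for b = 2 this is {{0,1}}, i.e. K_2, matching the convention *)
definition mon_cycle_edges :: "nat \<Rightarrow> nat set set" where
  "mon_cycle_edges b = {{i, i + 1} | i. i + 2 \<le> b} \<union> {{0, b - 1}}"

end

theory Submission imports Defs begin

abbreviation "P2 col \<equiv> (\<lambda>x y. x < y \<and> col {x, y} = (2::nat))"

lemma no_path_card:
  fixes X :: "nat set" and d k :: nat
  assumes "finite X" "1 \<le> k"
    and col12: "\<forall>u\<in>X. \<forall>v\<in>X. u \<noteq> v \<longrightarrow> col {u, v} = 1 \<or> col {u, v} = 2"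
    and deg: "\<forall>v\<in>X. card {u\<in>X. u \<noteq> v \<and> col {u, v} = 1} < d"
    and nop: "\<not> (\<exists>p. length p = k \<and> set p \<subseteq> X \<and> successively (P2 col) p)"
  shows "card X \<le> d * (k - 1)"
  using \<open>1 \<le> k\<close> assms(1,3,4,5)
proof (induction k arbitrary: X rule: nat_induct_at_least)
  case base
  have "X = {}"
  proof (rule ccontr)
    assume "X \<noteq> {}" then obtain v where "v \<in> X" by auto
    then have "length [v] = 1 \<and> set [v] \<subseteq> X \<and> successively (P2 col) [v]" by simp
    with base.prems show False by blast
  qed
  then show ?case by simp
next
  case (Suc m)
  define M where "M = {v\<in>X. \<exists>p. length p = m \<and> set p \<subseteq> X \<and> successively (P2 col) p \<and> last p = v}"
  have MX: "M \<subseteq> X" unfolding M_def by auto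
  have fin: "finite (X - M)" "finite M" using Suc.prems(1) MX finite_subset by auto
  have "card (X - M) \<le> d * (m - 1)"
  proof (rule Suc.IH)
    show "finite (X - M)" by fact
    show "\<forall>u\<in>X - M. \<forall>v\<in>X - M. u \<noteq> v \<longrightarrow> col {u, v} = 1 \<or> col {u, v} = 2" using Suc.prems by blast
    show "\<forall>v\<in>X - M. card {u \<in> X - M. u \<noteq> v \<and> col {u, v} = 1} < d"
    proof
      fix v assume v: "v \<in> X - M"
      have "card {u \<in> X - M. u \<noteq> v \<and> col {u, v} = 1} \<le> card {u \<in> X. u \<noteq> v \<and> col {u, v} = 1}"
        by (rule card_mono) (use Suc.prems(1) in auto)
      with Suc.prems(3) v show "card {u \<in> X - M. u \<noteq> v \<and> col {u, v} = 1} < d" by fastforce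
    qed
    show "\<not> (\<exists>p. length p = m \<and> set p \<subseteq> X - M \<and> successively (P2 col) p)"
    proof
      assume "\<exists>p. length p = m \<and> set p \<subseteq> X - M \<and> successively (P2 col) p"
      then obtain p where p: "length p = m" "set p \<subseteq> X - M" "successively (P2 col) p" by blast
      then have "p \<noteq> []" using Suc.hyps by auto
      then have "last p \<in> set p" by simp
      with p have "last p \<in> M" unfolding M_def by auto
      with p \<open>last p \<in> set p\<close> show False by auto
    qed
  qed
  moreover have "card M \<le> d"
  proof (rule ccontr)
    assume "\<not> card M \<le> d"
    then have "M \<noteq> {}" by auto
    then obtain v where v: "v \<in> M" by auto
    have sub: "M - {v} \<subseteq> {u\<in>X. u \<noteq> v \<and> col {u, v} = 1}"
    proof
      fix u assume u: "u \<in> M - {v}"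
      have "col {u, v} \<noteq> 2"
      proof
        assume c2: "col {u, v} = 2"
        have ext: False if xy: "x \<in> M" "y \<in> M" "x < y" "col {x, y} = 2" for x y
        proof -
          obtain p where p: "length p = m" "set p \<subseteq> X" "successively (P2 col) p" "last p = x"
            using xy(1) unfolding M_def by auto
          have "p \<noteq> []" using p(1) Suc.hyps by auto
          have "length (p @ [y]) = Suc m \<and> set (p @ [y]) \<subseteq> X \<and> successively (P2 col) (p @ [y])"
            using p xy MX \<open>p \<noteq> []\<close> by (auto simp: successively_append_iff)
          with Suc.prems(4) show False by blast
        qed
        have "u \<noteq> v" using u by auto
        then have "u < v \<or> v < u" by arith
        then show False
        proof
          assume "u < v" then show False using ext[of u v] u v c2 by auto
        next
          assume "v < u" then show False using ext[of v u] u v c2 by (auto simp: insert_commute)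
        qed
      qed
      then show "u \<in> {u\<in>X. u \<noteq> v \<and> col {u, v} = 1}" using Suc.prems(2) u v MX by blast
    qed
    have "card (M - {v}) \<le> card {u\<in>X. u \<noteq> v \<and> col {u, v} = 1}"
      by (rule card_mono[OF _ sub]) (use Suc.prems(1) in auto)
    also have "\<dots> < d" using Suc.prems(3) v MX by auto
    finally have "card M - 1 < d" using v fin by simp
    with \<open>\<not> card M \<le> d\<close> show False by arith
  qed
  ultimately have "card X \<le> d * (m - 1) + d"
    using card_Diff_subset[OF fin(2) MX] card_mono[OF Suc.prems(1) MX] by arith
  then show ?case using Suc.hyps by (cases m) auto
qed

lemma star_embed:
  fixes col :: "nat set \<Rightarrow> nat"
  assumes "c < a" "x < n" "S \<subseteq> {0..<n}" "x \<notin> S" "card S = a - 1" "\<forall>s\<in>S. col {x, s} = 1"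
  shows "\<exists>phi. embedding_in_colour n col 1 a (star_edges a c) phi \<and> cyc_increasing a phi"
proof -
  have finS: "finite S" using assms(3) finite_subset by blast
  define L where "L = sorted_list_of_set (insert x S)"
  have lenL: "length L = a" unfolding L_def using finS assms(4,5,1) by simp
  have setL: "set L = insert x S" unfolding L_def by (rule set_sorted_list_of_set) (simp add: finS)
  have sortL: "sorted_wrt (<) L" unfolding L_def by simp
  have distL: "distinct L" unfolding L_def by simp
  have "x \<in> set L" using setL by simp
  then obtain k where k0: "k < length L" "L ! k = x" by (auto simp: in_set_conv_nth)
  then have k: "k < a" "L ! k = x" using lenL by simp_all
  define t where "t = (if k \<le> c then c - k else c + a - k)"
  have ta: "t < a" unfolding t_def using k assms(1) by auto
  define sg where "sg = (\<lambda>j. if t \<le> j then j - t else j + a - t)"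
  define phi where "phi = (\<lambda>j. L ! sg j)"
  have sga: "sg j < a" if "j < a" for j using that ta unfolding sg_def by auto
  have sginj: "inj_on sg {0..<a}" unfolding sg_def inj_on_def using ta by auto
  have sgc: "sg c = k" unfolding sg_def t_def using k assms(1) by auto
  have phiinj: "inj_on phi {0..<a}"
  proof -
    have "inj_on (nth L) (sg ` {0..<a})" using inj_on_nth[OF distL, of "sg ` {0..<a}"] sga lenL by auto
    then have "inj_on (nth L \<circ> sg) {0..<a}" using comp_inj_on[OF sginj] by blast
    then show ?thesis unfolding phi_def comp_def .
  qed
  have phiL: "phi j \<in> set L" if "j < a" for j unfolding phi_def using sga[OF that] lenL by simp
  have phic: "phi c = x" unfolding phi_def using sgc k by simp
  have emb: "embedding_in_colour n col 1 a (star_edges a c) phi"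
    unfolding embedding_in_colour_def
  proof (intro conjI)
    show "inj_on phi {0..<a}" by fact
    show "phi ` {0..<a} \<subseteq> {0..<n}"
    proof
      fix y assume "y \<in> phi ` {0..<a}"
      then obtain j where "j < a" "y = phi j" by auto
      then have "y \<in> insert x S" using phiL setL by auto
      then show "y \<in> {0..<n}" using assms(2,3) by auto
    qed
    show "\<forall>e\<in>star_edges a c. col (phi ` e) = 1"
    proof
      fix e assume "e \<in> star_edges a c"
      then obtain v where v: "e = {c, v}" "v < a" "v \<noteq> c" unfolding star_edges_def by auto
      have "phi v \<noteq> phi c"
      proof
        assume "phi v = phi c"
        then have "v = c" using inj_onD[OF phiinj] v(2) assms(1) by simp
        with v(3) show False by simp
      qed
      then have "phi v \<noteq> x" using phic by simp
      moreover have "phi v \<in> insert x S" using phiL[OF v(2)] setL by simp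
      ultimately have pS: "phi v \<in> S" by simp
      have "phi ` e = {x, phi v}" using v(1) phic by simp
      then show "col (phi ` e) = 1" using assms(6) pS by simp
    qed
  qed
  have meq: "map phi ([t..<a] @ [0..<t]) = L"
  proof (rule nth_equalityI)
    show "length (map phi ([t..<a] @ [0..<t])) = length L" using lenL ta by simp
    fix i assume "i < length (map phi ([t..<a] @ [0..<t]))"
    then have i: "i < a" using ta by simp
    show "map phi ([t..<a] @ [0..<t]) ! i = L ! i"
    proof (cases "i < a - t")
      case True then show ?thesis unfolding phi_def sg_def by (simp add: nth_append)
    next
      case False
      define j where "j = i - (a - t)"
      have j: "j < t" "\<not> t \<le> j" "j + a - t = i" using False i ta unfolding j_def by linarith+
      have "map phi ([t..<a] @ [0..<t]) ! i = map phi [0..<t] ! j" using False unfolding j_def by (simp add: nth_append)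
      also have "\<dots> = phi j" using j by simp
      also have "\<dots> = L ! (j + a - t)" unfolding phi_def sg_def using j by simp
      finally show ?thesis using j by simp
    qed
  qed
  have "sorted_wrt (<) (map phi ([t..<a] @ [0..<t]))" using sortL by (simp only: meq)
  then have "cyc_increasing a phi" unfolding cyc_increasing_def using ta by blast
  with emb show ?thesis by blast
qed


lemma cycle_embed:
  fixes col :: "nat set \<Rightarrow> nat"
  assumes b: "2 \<le> b" and lp: "length p = b - 1" and sp: "set p \<subseteq> X"
    and X: "\<forall>u\<in>X. 0 < u \<and> u < n \<and> col {0, u} = 2"
    and sc: "successively (P2 col) p"
  shows "\<exists>phi. embedding_in_colour n col 2 b (mon_cycle_edges b) phi \<and> cyc_increasing b phi"
proof -
  define L where "L = 0 # p"
  define phi where "phi = (\<lambda>i. L ! i)"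
  have lenL: "length L = b" unfolding L_def using lp b by simp
  have "successively (<) p" using successively_mono[OF sc] by auto
  then have "sorted_wrt (<) p" by (simp add: successively_conv_sorted_wrt)
  moreover have "\<forall>u\<in>set p. 0 < u" using sp X by auto
  ultimately have sortL: "sorted_wrt (<) L" unfolding L_def by simp
  then have distL: "distinct L" by (simp add: strict_sorted_iff)
  have mapL: "map phi ([0..<b] @ [0..<0]) = L" unfolding phi_def using lenL
    by (metis append_Nil2 map_nth upt_0)
  have cyc: "cyc_increasing b phi" unfolding cyc_increasing_def using b mapL sortL
  proof -
    have "0 < b" using b by simp
    then show "\<exists>t<b. sorted_wrt (<) (map phi ([t..<b] @ [0..<t]))" using mapL sortL by metis
  qed
  have emb: "embedding_in_colour n col 2 b (mon_cycle_edges b) phi"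
    unfolding embedding_in_colour_def
  proof (intro conjI)
    show "inj_on phi {0..<b}" unfolding phi_def using inj_on_nth[OF distL] lenL by simp
    show "phi ` {0..<b} \<subseteq> {0..<n}"
    proof
      fix y assume "y \<in> phi ` {0..<b}"
      then obtain j where j: "j < b" "y = phi j" by auto
      show "y \<in> {0..<n}"
      proof (cases j)
        case 0
        have "p ! 0 \<in> X" using nth_mem[of 0 p] lp b sp by auto
        then have "0 < n" using X by auto
        then show ?thesis using 0 j b unfolding phi_def L_def by simp
      next
        case (Suc i)
        then have "y \<in> set p" using j lp unfolding phi_def L_def by simp
        then show ?thesis using sp X by auto
      qed
    qed
    have p0: "col {0, p ! i} = 2" if "i < b - 1" for i
    proof -
      have "p ! i \<in> X" using nth_mem[of i p] that lp sp by auto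
      then show ?thesis using X by blast
    qed
    show "\<forall>e\<in>mon_cycle_edges b. col (phi ` e) = 2"
    proof
      fix e assume "e \<in> mon_cycle_edges b"
      then consider i where "e = {i, i + 1}" "i + 2 \<le> b" | "e = {0, b - 1}"
        unfolding mon_cycle_edges_def by auto
      then show "col (phi ` e) = 2"
      proof cases
        case 1
        show ?thesis
        proof (cases i)
          case 0 then show ?thesis using 1 p0[of 0] b unfolding phi_def L_def by simp
        next
          case (Suc j)
          have "Suc j < length p" using 1 Suc lp by simp
          then have "P2 col (p ! j) (p ! Suc j)" using successively_nth[OF sc] by blast
          then show ?thesis using 1 Suc unfolding phi_def L_def by simp
        qed
      next
        case 2
        have "b - 1 = Suc (b - 2)" using b by simp
        then show ?thesis using 2 p0[of "b - 2"] b unfolding phi_def L_def by simp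
      qed
    qed
  qed
  from emb cyc show ?thesis by blast
qed


lemma cyc_edge:
  assumes "2 \<le> b" "i < b" "\<forall>e\<in>mon_cycle_edges b. col (phi ` e) = j"
  shows "col {phi i, phi (Suc i mod b)} = j"
proof (cases "Suc i < b")
  case True
  then have "{i, i + 1} \<in> mon_cycle_edges b" unfolding mon_cycle_edges_def by auto
  then show ?thesis using assms True by auto
next
  case False
  then have i: "i = b - 1" using assms by auto
  then have "Suc i = b" using assms by simp
  then have "Suc i mod b = 0" by simp
  have "{0, b - 1} \<in> mon_cycle_edges b" unfolding mon_cycle_edges_def by auto
  then show ?thesis using assms i by (auto simp: insert_commute)
qed

lemma cyc_nth:
  assumes "t < b" "k < b"
  shows "map phi ([t..<b] @ [0..<t]) ! k = phi ((t + k) mod b)"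
proof (cases "k < b - t")
  case True then show ?thesis using assms by (simp add: nth_append)
next
  case False
  then have h1: "b \<le> t + k" "t + k - b < b" using assms by linarith+
  then have "(t + k) mod b = (t + k - b) mod b" by (simp add: le_mod_geq)
  also have "\<dots> = t + k - b" using h1 by simp
  also have "\<dots> = k - (b - t)" using assms h1 by linarith
  finally have "(t + k) mod b = k - (b - t)" .
  then show ?thesis using assms False by (simp add: nth_append)
qed

lemma lower:
  fixes a b c n :: nat
  assumes "1 \<le> a" "2 \<le> b" "c < a" "n \<le> (a - 1) * (b - 1)"
  shows "\<not> cyc_arrows n a (star_edges a c) b (mon_cycle_edges b)"
proof (cases "a = 1")
  case True
  then have n0: "n = 0" using assms by simp
  have tc: "two_colouring n (\<lambda>_. 1)" unfolding two_colouring_def by simp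
  have ne: "\<not> embedding_in_colour n col j h E phi" if "1 \<le> h" for col j h E phi
    using that n0 unfolding embedding_in_colour_def by auto
  show ?thesis
  proof
    assume "cyc_arrows n a (star_edges a c) b (mon_cycle_edges b)"
    then have "(\<exists>phi. embedding_in_colour n (\<lambda>_. 1) 1 a (star_edges a c) phi \<and> cyc_increasing a phi) \<or>
        (\<exists>phi. embedding_in_colour n (\<lambda>_. 1) 2 b (mon_cycle_edges b) phi \<and> cyc_increasing b phi)"
      using tc unfolding cyc_arrows_def by blast
    moreover have "1 \<le> b" using assms by simp
    ultimately show False using ne[where h=a] ne[where h=b] assms(1) by blast
  qed
next
  case False
  define d where "d = a - 1"
  have d: "1 \<le> d" using False assms d_def by simp
  define col :: "nat set \<Rightarrow> nat" where
    "col = (\<lambda>e. if \<exists>x y. e = {x, y} \<and> x div d \<noteq> y div d then 2 else 1)"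
  have colD: "x div d = y div d" if "col {x, y} = 1" for x y
    using that unfolding col_def by (auto split: if_splits)
  have colD2: "x div d \<noteq> y div d" if "col {x, y} = 2" for x y
    using that unfolding col_def by (auto split: if_splits simp: doubleton_eq_iff)
  have tc: "two_colouring n col" unfolding two_colouring_def col_def by auto
  have nostar: False if emb: "embedding_in_colour n col 1 a (star_edges a c) phi" for phi
  proof -
    define q where "q = phi c div d"
    have "phi v div d = q" if "v < a" for v
    proof (cases "v = c")
      case True then show ?thesis using q_def by simp
    next
      case False
      then have "{c, v} \<in> star_edges a c" using that unfolding star_edges_def by auto
      then have "col {phi c, phi v} = 1" using emb unfolding embedding_in_colour_def by auto
      then show ?thesis using colD q_def by auto
    qed
    note qv = this
    have "phi ` {0..<a} \<subseteq> {q * d..<q * d + d}"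
    proof
      fix y assume "y \<in> phi ` {0..<a}"
      then obtain v where v: "v < a" "y = phi v" by auto
      have yq: "y div d = q" using qv v by simp
      have e: "y div d * d + y mod d = y" by (rule div_mult_mod_eq)
      have m: "y mod d < d" using d by simp
      from e m yq show "y \<in> {q * d..<q * d + d}" by (simp add: mult.commute)
    qed
    then have "card (phi ` {0..<a}) \<le> card {q * d..<q * d + d}" by (intro card_mono) simp_all
    then have "card (phi ` {0..<a}) \<le> d" by simp
    moreover have "card (phi ` {0..<a}) = a"
    proof -
      have "inj_on phi {0..<a}" using emb unfolding embedding_in_colour_def by blast
      then have "card (phi ` {0..<a}) = card {0..<a}" by (rule card_image)
      then show ?thesis by simp
    qed
    ultimately show False using d_def assms(1) by simp
  qed
  have nocyc: False if emb: "embedding_in_colour n col 2 b (mon_cycle_edges b) phi"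
      and ci: "cyc_increasing b phi" for phi
  proof -
    obtain t where t: "t < b" "sorted_wrt (<) (map phi ([t..<b] @ [0..<t]))"
      using ci unfolding cyc_increasing_def by auto
    define L where "L = map phi ([t..<b] @ [0..<t])"
    have lenL: "length L = b" unfolding L_def using t by simp
    have Lk: "L ! k = phi ((t + k) mod b)" if "k < b" for k
      unfolding L_def using cyc_nth[OF t(1) that] .
    have step: "L ! k div d < L ! Suc k div d" if "Suc k < b" for k
    proof -
      have "L ! k < L ! Suc k" using t(2) lenL that unfolding L_def[symmetric]
        by (simp add: sorted_wrt_iff_nth_less)
      then have le: "L ! k div d \<le> L ! Suc k div d" by (simp add: div_le_mono)
      have "(t + Suc k) mod b = Suc ((t + k) mod b) mod b" by (simp add: mod_Suc_eq)
      then have "col {L ! k, L ! Suc k} = 2"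
        using cyc_edge[OF assms(2), of "(t + k) mod b" col phi 2] emb t(1) that Lk
        unfolding embedding_in_colour_def by auto
      then have "L ! k div d \<noteq> L ! Suc k div d" by (rule colD2)
      with le show ?thesis by linarith
    qed
    have ge: "k \<le> L ! k div d" if "k < b" for k
      using that
    proof (induction k)
      case 0 then show ?case by simp
    next
      case (Suc k)
      then have "k \<le> L ! k div d" by simp
      moreover have "L ! k div d < L ! Suc k div d" using step[of k] Suc.prems by blast
      ultimately show ?case by linarith
    qed
    have "L ! (b - 1) \<in> phi ` {0..<b}" using Lk[of "b - 1"] assms(2) by auto
    then have "L ! (b - 1) < n" using emb unfolding embedding_in_colour_def by auto
    then have "L ! (b - 1) < d * (b - 1)" using assms(4) d_def by simp
    then have "L ! (b - 1) div d < b - 1" by (intro less_mult_imp_div_less) (simp add: mult.commute)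
    with ge[of "b - 1"] assms(2) show False by simp
  qed
  show ?thesis unfolding cyc_arrows_def using tc nostar nocyc by blast
qed


lemma upper:
  fixes a b c :: nat
  assumes "1 \<le> a" "2 \<le> b" "c < a"
  shows "cyc_arrows (1 + (a - 1) * (b - 1)) a (star_edges a c) b (mon_cycle_edges b)"
  unfolding cyc_arrows_def
proof (intro allI impI)
  fix col :: "nat set \<Rightarrow> nat"
  define n where "n = 1 + (a - 1) * (b - 1)"
  assume tc: "two_colouring (1 + (a - 1) * (b - 1)) col"
  then have tc': "two_colouring n col" unfolding n_def .
  have col12: "col {u, v} = 1 \<or> col {u, v} = 2" if "u < n" "v < n" "u \<noteq> v" for u v
    using tc' that unfolding two_colouring_def by auto
  define D where "D = (\<lambda>x. {u\<in>{0..<n}. u \<noteq> x \<and> col {x, u} = 1})"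
  show "(\<exists>phi. embedding_in_colour (1 + (a - 1) * (b - 1)) col 1 a (star_edges a c) phi \<and> cyc_increasing a phi) \<or>
        (\<exists>phi. embedding_in_colour (1 + (a - 1) * (b - 1)) col 2 b (mon_cycle_edges b) phi \<and> cyc_increasing b phi)"
  proof (cases "\<exists>x<n. a - 1 \<le> card (D x)")
    case True
    then obtain x where x: "x < n" "a - 1 \<le> card (D x)" by auto
    obtain S where S: "S \<subseteq> D x" "card S = a - 1"
      using obtain_subset_with_card_n[OF x(2)] by blast
    have "\<exists>phi. embedding_in_colour n col 1 a (star_edges a c) phi \<and> cyc_increasing a phi"
      by (rule star_embed[OF assms(3) x(1), of S]) (use S in \<open>auto simp: D_def\<close>)
    then have "\<exists>phi. embedding_in_colour (1 + (a - 1) * (b - 1)) col 1 a (star_edges a c) phi \<and> cyc_increasing a phi"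
      by (simp only: n_def)
    then show ?thesis by (rule disjI1)
  next
    case False
    then have deg: "card (D x) < a - 1" if "x < n" for x using that by auto
    define X where "X = {u. 0 < u \<and> u < n \<and> col {0, u} = 2}"
    have finX: "finite X" by (rule finite_subset[of _ "{0..<n}"]) (auto simp: X_def)
    have n0: "0 < n" unfolding n_def by simp
    have "{1..<n} \<subseteq> X \<union> D 0"
    proof
      fix u assume u: "u \<in> {1..<n}"
      then have "col {0, u} = 1 \<or> col {0, u} = 2" using col12[of 0 u] n0 by auto
      then show "u \<in> X \<union> D 0" using u unfolding X_def D_def by auto
    qed
    then have "card {1..<n} \<le> card (X \<union> D 0)" by (intro card_mono) (auto simp: finX D_def)
    also have "\<dots> \<le> card X + card (D 0)" by (rule card_Un_le)
    finally have "n - 1 < card X + (a - 1)" using deg[OF n0] by simp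
    moreover have "n - 1 = (a - 1) * (b - 2) + (a - 1)"
    proof -
      have "b - 1 = Suc (b - 2)" using assms(2) by simp
      then show ?thesis unfolding n_def by simp
    qed
    ultimately have cX0: "(a - 1) * (b - 2) < card X" by linarith
    have "b - 1 - 1 = b - 2" by simp
    then have cX: "\<not> card X \<le> (a - 1) * (b - 1 - 1)" using cX0 by simp
    have "\<exists>p. length p = b - 1 \<and> set p \<subseteq> X \<and> successively (P2 col) p"
    proof (rule ccontr)
      assume nop: "\<not> ?thesis"
      have "card X \<le> (a - 1) * (b - 1 - 1)"
      proof (rule no_path_card[OF finX _ _ _ nop])
        show "1 \<le> b - 1" using assms(2) by simp
        show "\<forall>u\<in>X. \<forall>v\<in>X. u \<noteq> v \<longrightarrow> col {u, v} = 1 \<or> col {u, v} = 2"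
        proof (intro ballI impI)
          fix u v assume uv: "u \<in> X" "v \<in> X" "u \<noteq> v"
          then have "u < n" "v < n" by (simp_all add: X_def)
          then show "col {u, v} = 1 \<or> col {u, v} = 2" using col12 uv(3) by blast
        qed
        show "\<forall>v\<in>X. card {u \<in> X. u \<noteq> v \<and> col {u, v} = 1} < a - 1"
        proof
          fix v assume v: "v \<in> X"
          have "{u \<in> X. u \<noteq> v \<and> col {u, v} = 1} \<subseteq> D v"
          proof
            fix u assume u: "u \<in> {u \<in> X. u \<noteq> v \<and> col {u, v} = 1}"
            have "{u, v} = {v, u}" by (rule insert_commute)
            with u have c1: "col {v, u} = 1" by simp
            from u have "u < n" "u \<noteq> v" by (simp_all add: X_def)
            with c1 show "u \<in> D v" by (simp add: D_def)
          qed
          then have "card {u \<in> X. u \<noteq> v \<and> col {u, v} = 1} \<le> card (D v)"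
            by (intro card_mono) (auto simp: D_def)
          also have "\<dots> < a - 1" using deg v unfolding X_def by auto
          finally show "card {u \<in> X. u \<noteq> v \<and> col {u, v} = 1} < a - 1" .
        qed
      qed
      with cX show False by simp
    qed
    then obtain p where p: "length p = b - 1" "set p \<subseteq> X" "successively (P2 col) p" by blast
    have "\<exists>phi. embedding_in_colour n col 2 b (mon_cycle_edges b) phi \<and> cyc_increasing b phi"
      by (rule cycle_embed[OF assms(2) p(1) p(2) _ p(3)]) (auto simp: X_def)
    then have "\<exists>phi. embedding_in_colour (1 + (a - 1) * (b - 1)) col 2 b (mon_cycle_edges b) phi \<and> cyc_increasing b phi"
      by (simp only: n_def)
    then show ?thesis by (rule disjI2)
  qed
qed

theorem corollary4p19:
  fixes a b c :: nat
  assumes "1 \<le> a" and "2 \<le> b" and "c < a"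
  shows "R_cyc a (star_edges a c) b (mon_cycle_edges b) = 1 + (a - 1) * (b - 1)"
  unfolding R_cyc_def
proof (rule Least_equality)
  show "cyc_arrows (1 + (a - 1) * (b - 1)) a (star_edges a c) b (mon_cycle_edges b)"
    by (rule upper[OF assms])
  fix m assume "cyc_arrows m a (star_edges a c) b (mon_cycle_edges b)"
  then show "1 + (a - 1) * (b - 1) \<le> m" using lower[OF assms, of m] by linarith
qed

end
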